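(* For all integers $m\geq 3$ and $n\geq 1$, the prism graph $C[m]\times P[n+1]$ is antimagic.
   Context: All graphs are finite, undirected and simple. $C[m]$ denotes the cycle on $m$ vertices and $P[k]$ the path on $k$ vertices. The Cartesian product $G_1\times G_2$ of graphs $G_1=(V_1,E_1)$ and $G_2=(V_2,E_2)$ has vertex set $V_1\times V_2$, with $(u_1,u_2)$ adjacent to $(v_1,v_2)$ iff either $u_1=v_1$ and $u_2v_2\in E_2$, or $u_2=v_2$ and $u_1v_1\in E_1$. An antimagic labeling of a graph with $m'$ edges is a bijection $f$ from its edge set to $\{1,\ldots,m'\}$ such that the vertex sums $f^+(v)=\sum_{e\ni v} f(e)$ (sum over edges incident with $v$) are pairwise distinct over all vertices $v$. A graph is antimagic if it admits an antimagic labeling. *)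

theory Defs
  imports Main
begin

definition cycle_edges :: "nat \<Rightarrow> nat set set" where
  "cycle_edges m = {{i, (i + 1) mod m} | i. i < m}"

definition cycle_graph :: "nat \<Rightarrow> nat set \<times> nat set set" where
  "cycle_graph m = ({0..<m}, cycle_edges m)"

definition path_edges :: "nat \<Rightarrow> nat set set" where
  "path_edges k = {{j, j + 1} | j. j + 1 < k}"

definition path_graph :: "nat \<Rightarrow> nat set \<times> nat set set" where
  "path_graph k = ({0..<k}, path_edges k)"

definition cart_prod ::
  "'a set \<times> 'a set set \<Rightarrow> 'b set \<times> 'b set set \<Rightarrow> ('a \<times> 'b) set \<times> ('a \<times> 'b) set set" where
  "cart_prod G1 G2 =
     (fst G1 \<times> fst G2,
      {{(u1, u2), (v1, v2)} | u1 u2 v1 v2.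
         u1 \<in> fst G1 \<and> v1 \<in> fst G1 \<and> u2 \<in> fst G2 \<and> v2 \<in> fst G2 \<and>
         ((u1 = v1 \<and> {u2, v2} \<in> snd G2) \<or> (u2 = v2 \<and> {u1, v1} \<in> snd G1))})"

definition vertex_sum :: "'a set set \<Rightarrow> ('a set \<Rightarrow> nat) \<Rightarrow> 'a \<Rightarrow> nat" where
  "vertex_sum E f v = (\<Sum>e\<in>{e\<in>E. v \<in> e}. f e)"

definition antimagic_labeling :: "'a set \<times> 'a set set \<Rightarrow> ('a set \<Rightarrow> nat) \<Rightarrow> bool" where
  "antimagic_labeling G f \<longleftrightarrow>
     bij_betw f (snd G) {1..card (snd G)} \<and>
     inj_on (vertex_sum (snd G) f) (fst G)"

definition antimagic :: "'a set \<times> 'a set set \<Rightarrow> bool" where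
  "antimagic G \<longleftrightarrow> (\<exists>f. antimagic_labeling G f)"

end

theory Submission
  imports Defs
begin


definition sg :: "nat \<Rightarrow> nat \<Rightarrow> nat" where
  "sg m i = (if 2*i+1 < m then 2*i+1 else 2*(m-1-i))"
definition rk :: "nat \<Rightarrow> nat \<Rightarrow> nat" where
  "rk m i = (if 2*i < m then 2*i else 2*m-2*i-1)"
definition pm :: "nat \<Rightarrow> nat \<Rightarrow> nat" where
  "pm m i = (if i = 0 then m - 1 else i - 1)"

lemma sg_lt: "i < m \<Longrightarrow> sg m i < m" unfolding sg_def by auto
lemma rk_lt: "i < m \<Longrightarrow> rk m i < m" unfolding rk_def by auto
lemma sg_inj: "i < m \<Longrightarrow> i' < m \<Longrightarrow> sg m i = sg m i' \<Longrightarrow> i = i'"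
  unfolding sg_def by (auto split: if_splits) presburger+
lemma rk_inj: "i < m \<Longrightarrow> i' < m \<Longrightarrow> rk m i = rk m i' \<Longrightarrow> i = i'"
  unfolding rk_def by (auto split: if_splits) presburger+

definition G :: "nat \<Rightarrow> nat \<Rightarrow> nat \<Rightarrow> nat" where
  "G k m i = (if i = 0 then 1 else if 2*i+1 < m then (4+2*k)*i
      else if 2*i \<le> m then 2*m-3 + k*(m-1) else (2+k)*(2*m-2*i-1))"

lemma Gform: "m \<ge> 3 \<Longrightarrow> i < m \<Longrightarrow> sg m (pm m i) + sg m i + k * rk m i = G k m i"
proof -
  assume a: "m \<ge> 3" "i < m"
  consider "i = 0" | "i > 0" "2*i+1 < m" | "i>0" "\<not> 2*i+1 < m" "2*i \<le> m" | "2*i > m" by linarith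
  then show ?thesis
  proof cases
    case 1 then show ?thesis using a unfolding sg_def rk_def pm_def G_def by auto
  next
    case 2 then show ?thesis using a unfolding sg_def rk_def pm_def G_def by (auto simp: algebra_simps)
  next
    case 3
    then have "sg m (pm m i) = 2*i - 1" "sg m i = 2*m-2*i-2" "rk m i = m - 1"
      using a unfolding sg_def rk_def pm_def by auto
    then show ?thesis using 3 a unfolding G_def by (auto simp: algebra_simps)
  next
    case 4
    define t where "t = 2*m-2*i-1"
    have "sg m (pm m i) = t+1" "sg m i = t - 1" "rk m i = t" "t \<ge> 1"
      using 4 a unfolding sg_def rk_def pm_def t_def by auto
    then have "sg m (pm m i) + sg m i + k * rk m i = (2+k)*t" by (simp add: algebra_simps)
    then show ?thesis using 4 a unfolding t_def G_def by auto
  qed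
qed

lemma Ginj1: "m \<ge> 3 \<Longrightarrow> i < m \<Longrightarrow> i' < m \<Longrightarrow> G 1 m i = G 1 m i' \<Longrightarrow> i = i'"
  unfolding G_def by (auto split: if_splits) presburger+
lemma Ginj2: "m \<ge> 3 \<Longrightarrow> i < m \<Longrightarrow> i' < m \<Longrightarrow> G 2 m i = G 2 m i' \<Longrightarrow> i = i'"
  unfolding G_def by (auto split: if_splits) presburger+


definition ce :: "nat \<Rightarrow> nat \<Rightarrow> nat \<Rightarrow> (nat \<times> nat) set" where
  "ce m i j = {(i,j), ((i+1) mod m, j)}"
definition pe :: "nat \<Rightarrow> nat \<Rightarrow> (nat \<times> nat) set" where
  "pe i j = {(i,j), (i,j+1)}"
definition phi :: "nat \<Rightarrow> bool \<times> nat \<times> nat \<Rightarrow> (nat \<times> nat) set" where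
  "phi m d = (case d of (b,i,j) \<Rightarrow> if b then pe i j else ce m i j)"
definition Dm :: "nat \<Rightarrow> nat \<Rightarrow> (bool \<times> nat \<times> nat) set" where
  "Dm m n = {(False,i,j) | i j. i < m \<and> j \<le> n} \<union> {(True,i,j) | i j. i < m \<and> j < n}"

lemma mem_E: "u1 < m \<Longrightarrow> v1 < m \<Longrightarrow> u2 \<le> n \<Longrightarrow> v2 \<le> n \<Longrightarrow>
  (u1 = v1 \<and> {u2,v2} \<in> path_edges (n+1)) \<or> (u2 = v2 \<and> {u1,v1} \<in> cycle_edges m) \<Longrightarrow>
  {(u1,u2),(v1,v2)} \<in> snd (cart_prod (cycle_graph m) (path_graph (n+1)))"
  unfolding cart_prod_def cycle_graph_def path_graph_def snd_conv fst_conv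
  by (intro CollectI exI[of _ u1] exI[of _ u2] exI[of _ v1] exI[of _ v2]) auto

lemma edges_eq:
  assumes "m \<ge> 3"
  shows "snd (cart_prod (cycle_graph m) (path_graph (n+1))) = phi m ` Dm m n"
proof
  show "snd (cart_prod (cycle_graph m) (path_graph (n+1))) \<subseteq> phi m ` Dm m n"
  proof
    fix e assume "e \<in> snd (cart_prod (cycle_graph m) (path_graph (n+1)))"
    then obtain u1 u2 v1 v2 where e: "e = {(u1,u2),(v1,v2)}" and r: "u1 < m" "v1 < m" "u2 < n+1" "v2 < n+1"
      and c: "(u1 = v1 \<and> {u2,v2} \<in> path_edges (n+1)) \<or> (u2 = v2 \<and> {u1,v1} \<in> cycle_edges m)"
      unfolding cart_prod_def cycle_graph_def path_graph_def by auto
    from c show "e \<in> phi m ` Dm m n"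
    proof
      assume h: "u1 = v1 \<and> {u2,v2} \<in> path_edges (n+1)"
      then obtain j where j: "{u2,v2} = {j,j+1}" "j+1 < n+1" unfolding path_edges_def by auto
      then have "e = pe u1 j" using e h unfolding pe_def by (auto simp: doubleton_eq_iff)
      moreover have "(True,u1,j) \<in> Dm m n" using j r unfolding Dm_def by auto
      ultimately show ?thesis unfolding phi_def by force
    next
      assume h: "u2 = v2 \<and> {u1,v1} \<in> cycle_edges m"
      then obtain i where i: "{u1,v1} = {i,(i+1) mod m}" "i < m" unfolding cycle_edges_def by auto
      then have "e = ce m i u2" using e h unfolding ce_def by (auto simp: doubleton_eq_iff)
      moreover have "(False,i,u2) \<in> Dm m n" using i r unfolding Dm_def by auto
      ultimately show ?thesis unfolding phi_def by force
    qed
  qed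
next
  show "phi m ` Dm m n \<subseteq> snd (cart_prod (cycle_graph m) (path_graph (n+1)))"
  proof
    fix e assume "e \<in> phi m ` Dm m n"
    then obtain b i j where d: "(b,i,j) \<in> Dm m n" "e = phi m (b,i,j)" by auto
    show "e \<in> snd (cart_prod (cycle_graph m) (path_graph (n+1)))"
    proof (cases b)
      case True
      then have "i < m" "j < n" "e = {(i,j),(i,j+1)}" using d unfolding Dm_def phi_def pe_def by auto
      moreover have "{j, j+1} \<in> path_edges (n+1)" using \<open>j < n\<close> unfolding path_edges_def by auto
      ultimately show ?thesis using mem_E[of i m i j n "j+1"] by auto
    next
      case False
      then have "i < m" "j \<le> n" "e = {(i,j),((i+1) mod m,j)}" using d unfolding Dm_def phi_def ce_def by auto
      moreover have "{i, (i+1) mod m} \<in> cycle_edges m" using \<open>i < m\<close> unfolding cycle_edges_def by auto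
      moreover have "(i+1) mod m < m" using \<open>i < m\<close> by auto
      ultimately show ?thesis using mem_E[of i m "(i+1) mod m" j n j] by auto
    qed
  qed
qed

lemma suc_mod_pm: "m \<ge> 3 \<Longrightarrow> i < m \<Longrightarrow> i' < m \<Longrightarrow> (i = (i'+1) mod m) = (i' = pm m i)"
  unfolding pm_def
  by (cases "i' = m - 1") (auto simp: mod_Suc)

lemma phi_inj: assumes "m \<ge> 3" shows "inj_on (phi m) (Dm m n)"
proof
  fix x y assume x: "x \<in> Dm m n" and y: "y \<in> Dm m n" and eq: "phi m x = phi m y"
  obtain b i j where xd: "x = (b,i,j)" by (cases x) auto
  obtain b' i' j' where yd: "y = (b',i',j')" by (cases y) auto
  have im: "i < m" "i' < m" using x y xd yd unfolding Dm_def by auto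
  show "x = y"
  proof (cases b; cases b')
    assume "b" "b'"
    then show ?thesis using eq xd yd unfolding phi_def pe_def by (auto simp: doubleton_eq_iff)
  next
    assume "b" "\<not> b'"
    then have "(i,j) \<in> ce m i' j'" "(i,j+1) \<in> ce m i' j'" using eq xd yd unfolding phi_def pe_def by auto
    then show ?thesis unfolding ce_def by auto
  next
    assume "\<not> b" "b'"
    then have "(i',j') \<in> ce m i j" "(i',j'+1) \<in> ce m i j" using eq xd yd unfolding phi_def pe_def by auto
    then show ?thesis unfolding ce_def by auto
  next
    assume "\<not> b" "\<not> b'"
    then have "{(i,j),((i+1) mod m, j)} = {(i',j'),((i'+1) mod m, j')}"
      using eq xd yd unfolding phi_def ce_def by auto
    then have "j = j'" and "i = i' \<or> (i = (i'+1) mod m \<and> i' = (i+1) mod m)"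
      by (auto simp: doubleton_eq_iff)
    moreover have "\<not> (i = (i'+1) mod m \<and> i' = (i+1) mod m)"
    proof
      assume h: "i = (i'+1) mod m \<and> i' = (i+1) mod m"
      have "i' = pm m i" using suc_mod_pm[OF assms, of i i'] im h by blast
      then have d1: "(i = 0 \<and> i' = m-1) \<or> (i > 0 \<and> i' = i - 1)" unfolding pm_def by (cases "i = 0") auto
      have "i = pm m i'" using suc_mod_pm[OF assms, of i' i] im h by blast
      then have d2: "(i' = 0 \<and> i = m-1) \<or> (i' > 0 \<and> i = i' - 1)" unfolding pm_def by (cases "i' = 0") auto
      show False using d1 d2 assms by linarith
    qed
    ultimately show ?thesis using xd yd \<open>\<not> b\<close> \<open>\<not> b'\<close> by auto
  qed
qed


definition cb :: "nat \<Rightarrow> nat \<Rightarrow> nat" where "cb n j = (if j < n then j else 2*n)"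
definition hh :: "nat \<Rightarrow> nat \<Rightarrow> bool \<times> nat \<times> nat \<Rightarrow> nat" where
  "hh m n d = (case d of (b,i,j) \<Rightarrow> if b then m*(n+j) + rk m i + 1 else m * cb n j + sg m i + 1)"

lemma divmod_eq: fixes m :: nat assumes "a < m" "b < m" "m*x + a = m*y + b" shows "x = y \<and> a = b"
proof -
  have "x = y"
  proof (rule ccontr)
    assume "x \<noteq> y"
    then consider "Suc x \<le> y" | "Suc y \<le> x" by linarith
    then show False
    proof cases
      case 1 then have "m * Suc x \<le> m * y" by (rule mult_le_mono2)
      then show False using assms by simp
    next
      case 2 then have "m * Suc y \<le> m * x" by (rule mult_le_mono2)
      then show False using assms by simp
    qed
  qed
  then show ?thesis using assms(3) by auto
qed

lemma hh_inj: assumes "m \<ge> 3" shows "inj_on (hh m n) (Dm m n)"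
proof
  fix x y assume x: "x \<in> Dm m n" and y: "y \<in> Dm m n" and eq: "hh m n x = hh m n y"
  obtain b i j where xd: "x = (b,i,j)" by (cases x) auto
  obtain b' i' j' where yd: "y = (b',i',j')" by (cases y) auto
  have im: "i < m" "i' < m" using x y xd yd unfolding Dm_def by auto
  have sl: "sg m i < m" "sg m i' < m" "rk m i < m" "rk m i' < m" using im sg_lt rk_lt by auto
  show "x = y"
  proof (cases b; cases b')
    assume "b" "b'"
    then have "m*(n+j) + rk m i = m*(n+j') + rk m i'" using eq xd yd unfolding hh_def by auto
    then have "n+j = n+j'" "rk m i = rk m i'" using divmod_eq sl by blast+
    then show ?thesis using rk_inj im xd yd \<open>b\<close> \<open>b'\<close> by auto
  next
    assume "b" "\<not> b'"
    then have "m*(n+j) + rk m i = m*cb n j' + sg m i'" using eq xd yd unfolding hh_def by auto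
    then have "n+j = cb n j'" using divmod_eq sl by blast
    moreover have "j < n" "j' \<le> n" using x y xd yd \<open>b\<close> \<open>\<not> b'\<close> unfolding Dm_def by auto
    ultimately show ?thesis unfolding cb_def by (auto split: if_splits)
  next
    assume "\<not> b" "b'"
    then have "m*(n+j') + rk m i' = m*cb n j + sg m i" using eq xd yd unfolding hh_def by auto
    then have "n+j' = cb n j" using divmod_eq sl by blast
    moreover have "j' < n" "j \<le> n" using x y xd yd \<open>b'\<close> \<open>\<not> b\<close> unfolding Dm_def by auto
    ultimately show ?thesis unfolding cb_def by (auto split: if_splits)
  next
    assume "\<not> b" "\<not> b'"
    then have "m*cb n j + sg m i = m*cb n j' + sg m i'" using eq xd yd unfolding hh_def by auto
    then have "cb n j = cb n j'" "sg m i = sg m i'" using divmod_eq sl by blast+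
    moreover have "j' \<le> n" "j \<le> n" using x y xd yd \<open>\<not> b'\<close> \<open>\<not> b\<close> unfolding Dm_def by auto
    ultimately show ?thesis using sg_inj im xd yd \<open>\<not> b\<close> \<open>\<not> b'\<close> unfolding cb_def by (auto split: if_splits)
  qed
qed

lemma hh_range: assumes "m \<ge> 3" shows "hh m n ` Dm m n \<subseteq> {1..m*(2*n+1)}"
proof
  fix y assume "y \<in> hh m n ` Dm m n"
  then obtain b i j where d: "(b,i,j) \<in> Dm m n" "y = hh m n (b,i,j)" by auto
  show "y \<in> {1..m*(2*n+1)}"
  proof (cases b)
    case True
    then have ij: "i < m" "j < n" using d unfolding Dm_def by auto
    have r: "rk m i + 1 \<le> m" using rk_lt[OF ij(1)] by simp
    have "m*(n+j) + m = m*(n+j+1)" by (simp add: algebra_simps)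
    also have "\<dots> \<le> m*(2*n+1)" using ij(2) by (intro mult_le_mono2) simp
    finally have q: "m*(n+j) + m \<le> m*(2*n+1)" .
    have "y = m*(n+j) + (rk m i + 1)" using d True unfolding hh_def by auto
    then have "1 \<le> y" "y \<le> m*(2*n+1)" using r q by linarith+
    then show ?thesis by simp
  next
    case False
    then have ij: "i < m" "j \<le> n" using d unfolding Dm_def by auto
    have r: "sg m i + 1 \<le> m" using sg_lt[OF ij(1)] by simp
    have c: "cb n j \<le> 2*n" unfolding cb_def by auto
    have "m*cb n j + m = m*(cb n j+1)" by (simp add: algebra_simps)
    also have "\<dots> \<le> m*(2*n+1)" using c by (intro mult_le_mono2) simp
    finally have q: "m*cb n j + m \<le> m*(2*n+1)" .
    have "y = m*cb n j + (sg m i + 1)" using d False unfolding hh_def by auto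
    then have "1 \<le> y" "y \<le> m*(2*n+1)" using r q by linarith+
    then show ?thesis by simp
  qed
qed



lemma Dm_eq: "Dm m n = {False} \<times> ({..<m} \<times> {..n}) \<union> {True} \<times> ({..<m} \<times> {..<n})"
  unfolding Dm_def by auto

lemma Dm_card: "card (Dm m n) = m*(2*n+1)"
proof -
  have "card (Dm m n) = card ({False} \<times> ({..<m} \<times> {..n})) + card ({True} \<times> ({..<m} \<times> {..<n}))"
    unfolding Dm_eq by (rule card_Un_disjoint) auto
  also have "\<dots> = m*(n+1) + m*n" by (simp add: card_cartesian_product)
  finally show ?thesis by (simp add: algebra_simps)
qed
lemma hh_bij: assumes "m \<ge> 3" shows "bij_betw (hh m n) (Dm m n) {1..m*(2*n+1)}"
proof -
  have c1: "card (hh m n ` Dm m n) = m*(2*n+1)"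
    using card_image[OF hh_inj[OF assms]] Dm_card by simp
  have c2: "card {1..m*(2*n+1)} = m*(2*n+1)" by simp
  have "hh m n ` Dm m n = {1..m*(2*n+1)}"
    by (rule card_subset_eq[OF finite_atLeastAtMost hh_range[OF assms]]) (simp only: c1 c2)
  then show ?thesis using hh_inj[OF assms] unfolding bij_betw_def by blast
qed


definition Sv :: "nat \<Rightarrow> nat \<Rightarrow> nat \<Rightarrow> nat \<Rightarrow> nat" where
  "Sv m n i j = hh m n (False,i,j) + hh m n (False,pm m i,j) + (if j<n then hh m n (True,i,j) else 0)
     + (if 0<j then hh m n (True,i,j-1) else 0)"

definition Wt :: "nat \<Rightarrow> nat \<Rightarrow> nat" where
  "Wt n j = (if j = 0 then n else if j < n then 2*n+4*j-1 else 6*n-1)"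
definition dg :: "nat \<Rightarrow> nat \<Rightarrow> nat" where
  "dg n j = (if j = 0 \<or> j = n then 3 else 4)"

lemma pm_lt: "m \<ge> 3 \<Longrightarrow> i < m \<Longrightarrow> pm m i < m" unfolding pm_def by auto
lemma pm_ne: "m \<ge> 3 \<Longrightarrow> i < m \<Longrightarrow> pm m i \<noteq> i" unfolding pm_def by auto

lemma Sv_form: assumes "m \<ge> 3" "n \<ge> 1" "i < m" "j \<le> n"
  shows "Sv m n i j = m * Wt n j + dg n j + G (dg n j - 2) m i"
proof -
  consider "j = 0" | "0 < j" "j < n" | "j = n" using assms by linarith
  then show ?thesis
  proof cases
    case 1
    have "Sv m n i j = m*n + 3 + (sg m (pm m i) + sg m i + 1 * rk m i)"
      using 1 assms unfolding Sv_def hh_def cb_def by simp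
    then show ?thesis using 1 assms Gform[OF assms(1,3), of 1] unfolding Wt_def dg_def by simp
  next
    case 2
    then obtain j0 where j0: "j = Suc j0" by (cases j) auto
    have "Sv m n i j = m*(2*n+4*j-1) + 4 + (sg m (pm m i) + sg m i + 2 * rk m i)"
      using 2 assms unfolding Sv_def hh_def cb_def j0 by (simp add: algebra_simps)
    then show ?thesis using 2 assms Gform[OF assms(1,3), of 2] unfolding Wt_def dg_def by simp
  next
    case 3
    then obtain n0 where n0: "n = Suc n0" using assms by (cases n) auto
    have "Sv m n i j = m*(6*n-1) + 3 + (sg m (pm m i) + sg m i + 1 * rk m i)"
      using 3 assms unfolding Sv_def hh_def cb_def n0 by (simp add: algebra_simps)
    then show ?thesis using 3 assms Gform[OF assms(1,3), of 1] unfolding Wt_def dg_def by simp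
  qed
qed

lemma G_le: assumes "m \<ge> 3" "i < m" shows "G k m i \<le> (2+k)*(m-1)"
proof -
  have "sg m (pm m i) < m" "sg m i < m" "rk m i < m"
    using sg_lt rk_lt pm_lt assms by blast+
  then have a: "sg m (pm m i) \<le> m - 1" "sg m i \<le> m - 1" "rk m i \<le> m - 1" by linarith+
  have "k * rk m i \<le> k * (m-1)" using a(3) by (rule mult_le_mono2)
  moreover have "(2+k)*(m-1) = 2*(m-1) + k*(m-1)" by (rule add_mult_distrib)
  ultimately have "sg m (pm m i) + sg m i + k * rk m i \<le> (2+k)*(m-1)" using a by linarith
  then show ?thesis using Gform[OF assms] by simp
qed

lemma Sv_bounds: assumes "m \<ge> 3" "n \<ge> 1" "i < m" "j \<le> n"
  shows "m * Wt n j + dg n j \<le> Sv m n i j" "Sv m n i j \<le> m * (Wt n j + dg n j)"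
proof -
  show "m * Wt n j + dg n j \<le> Sv m n i j" using Sv_form[OF assms] by simp
  have d: "dg n j \<ge> 3" "dg n j \<le> 4" unfolding dg_def by auto
  have "G (dg n j - 2) m i \<le> (2 + (dg n j - 2))*(m-1)" by (rule G_le[OF assms(1,3)])
  also have "\<dots> = dg n j * (m - 1)" proof - have "2 + (dg n j - 2) = dg n j" using d by simp then show ?thesis by simp qed
  finally have "Sv m n i j \<le> m * Wt n j + dg n j + dg n j * (m-1)" using Sv_form[OF assms] by simp
  also have "\<dots> = m * Wt n j + dg n j * m"
  proof -
    obtain m0 where "m = Suc m0" using assms(1) by (cases m) auto
    then show ?thesis by (simp add: algebra_simps)
  qed
  also have "\<dots> = m * (Wt n j + dg n j)" by (simp add: algebra_simps)
  finally show "Sv m n i j \<le> m * (Wt n j + dg n j)" .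
qed

lemma Wt_mono: assumes "n \<ge> 1" "j < j'" "j' \<le> n" shows "Wt n j + dg n j \<le> Wt n j'"
  using assms unfolding Wt_def dg_def by (simp split: if_split) linarith

lemma Sv_lt: assumes "m \<ge> 3" "n \<ge> 1" "i < m" "i' < m" "j < j'" "j' \<le> n"
  shows "Sv m n i j < Sv m n i' j'"
proof -
  have "Sv m n i j \<le> m * (Wt n j + dg n j)" using Sv_bounds(2)[OF assms(1,2,3)] assms by simp
  also have "\<dots> \<le> m * Wt n j'" using Wt_mono[OF assms(2,5,6)] by (rule mult_le_mono2)
  also have "\<dots> < m * Wt n j' + dg n j'" unfolding dg_def by auto
  also have "\<dots> \<le> Sv m n i' j'" using Sv_bounds(1)[OF assms(1,2,4,6)] .
  finally show ?thesis .
qed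

lemma Sv_inj: assumes "m \<ge> 3" "n \<ge> 1" "i < m" "i' < m" "j \<le> n" "j' \<le> n"
  and eq: "Sv m n i j = Sv m n i' j'" shows "i = i' \<and> j = j'"
proof -
  have "j = j'"
  proof (rule ccontr)
    assume "j \<noteq> j'"
    then consider "j < j'" | "j' < j" by linarith
    then show False
    proof cases
      case 1 then show False using Sv_lt[OF assms(1,2,3,4) 1 assms(6)] eq by simp
    next
      case 2 then show False using Sv_lt[OF assms(1,2,4,3) 2 assms(5)] eq by simp
    qed
  qed
  then have "G (dg n j - 2) m i = G (dg n j - 2) m i'"
    using eq Sv_form[OF assms(1,2,3,5)] Sv_form[OF assms(1,2,4,5)] by simp
  moreover have "dg n j - 2 = 1 \<or> dg n j - 2 = 2" unfolding dg_def by auto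
  ultimately have "i = i'" using Ginj1[OF assms(1,3,4)] Ginj2[OF assms(1,3,4)] by auto
  then show ?thesis using \<open>j = j'\<close> by simp
qed


definition Nv :: "nat \<Rightarrow> nat \<Rightarrow> nat \<Rightarrow> nat \<Rightarrow> (bool \<times> nat \<times> nat) set" where
  "Nv m n i j = {(False,i,j),(False,pm m i,j)} \<union> (if j<n then {(True,i,j)} else {})
     \<union> (if 0<j then {(True,i,j-1)} else {})"

lemma nbr: assumes "m \<ge> 3" "n \<ge> 1" "i < m" "j \<le> n"
  shows "{d \<in> Dm m n. (i,j) \<in> phi m d} = Nv m n i j"
proof (rule set_eqI)
  fix d :: "bool \<times> nat \<times> nat"
  obtain b i' j' where dd: "d = (b,i',j')" by (cases d) auto
  show "d \<in> {d \<in> Dm m n. (i,j) \<in> phi m d} \<longleftrightarrow> d \<in> Nv m n i j"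
  proof (cases b)
    case True
    have "(True,i',j') \<in> Dm m n \<longleftrightarrow> i' < m \<and> j' < n" unfolding Dm_def by auto
    moreover have "(i,j) \<in> phi m (True,i',j') \<longleftrightarrow> i = i' \<and> (j = j' \<or> j = j'+1)"
      unfolding phi_def pe_def by auto
    moreover have "(True,i',j') \<in> Nv m n i j \<longleftrightarrow> i' = i \<and> ((j<n \<and> j' = j) \<or> (0<j \<and> j' = j - 1))"
      unfolding Nv_def by auto
    ultimately show ?thesis using dd True assms by auto
  next
    case False
    have "(False,i',j') \<in> Dm m n \<longleftrightarrow> i' < m \<and> j' \<le> n" unfolding Dm_def by auto
    moreover have "(i,j) \<in> phi m (False,i',j') \<longleftrightarrow> j = j' \<and> (i = i' \<or> i = (i'+1) mod m)"
      unfolding phi_def ce_def by auto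
    moreover have "(False,i',j') \<in> Nv m n i j \<longleftrightarrow> j' = j \<and> (i' = i \<or> i' = pm m i)"
      unfolding Nv_def by auto
    moreover have "i' < m \<Longrightarrow> (i = (i'+1) mod m) = (i' = pm m i)"
      using suc_mod_pm[OF assms(1,3)] by blast
    moreover have "pm m i < m" using pm_lt assms by blast
    ultimately show ?thesis using dd False assms by auto
  qed
qed

lemma sum_nbr: assumes "m \<ge> 3" "n \<ge> 1" "i < m" "j \<le> n"
  shows "(\<Sum>d\<in>Nv m n i j. hh m n d) = Sv m n i j"
proof -
  have ne: "pm m i \<noteq> i" using pm_ne assms by blast
  consider "j = 0" | "0 < j" "j < n" | "j = n" using assms by linarith
  then show ?thesis
  proof cases
    case 1
    then have "Nv m n i j = {(False,i,j),(False,pm m i,j),(True,i,j)}" using assms unfolding Nv_def by auto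
    then show ?thesis using ne 1 assms unfolding Sv_def by simp
  next
    case 2
    then have "Nv m n i j = {(False,i,j),(False,pm m i,j),(True,i,j),(True,i,j-1)}" using assms unfolding Nv_def by auto
    then show ?thesis using ne 2 assms unfolding Sv_def by simp
  next
    case 3
    then have "Nv m n i j = {(False,i,j),(False,pm m i,j),(True,i,j-1)}" using assms unfolding Nv_def by auto
    then show ?thesis using ne 3 assms unfolding Sv_def by simp
  qed
qed

theorem theorem1p2:
  fixes m n :: nat
  assumes "m \<ge> 3" and "n \<ge> 1"
  shows "antimagic (cart_prod (cycle_graph m) (path_graph (n + 1)))"
proof -
  define Gr where "Gr = cart_prod (cycle_graph m) (path_graph (n + 1))"
  define f where "f = hh m n \<circ> inv_into (Dm m n) (phi m)"
  have EE: "snd Gr = phi m ` Dm m n" unfolding Gr_def using edges_eq[OF assms(1)] .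
  have VV: "fst Gr = {0..<m} \<times> {0..<n+1}" unfolding Gr_def cart_prod_def cycle_graph_def path_graph_def by simp
  have pinj: "inj_on (phi m) (Dm m n)" using phi_inj[OF assms(1)] .
  have pb: "bij_betw (phi m) (Dm m n) (snd Gr)" using pinj EE unfolding bij_betw_def by simp
  have cE: "card (snd Gr) = m*(2*n+1)" using bij_betw_same_card[OF pb] Dm_card by simp
  have fb: "bij_betw f (snd Gr) {1..card (snd Gr)}"
    unfolding f_def cE using bij_betw_trans[OF bij_betw_inv_into[OF pb] hh_bij[OF assms(1)]] .
  have vs: "vertex_sum (snd Gr) f (i,j) = Sv m n i j" if ij: "i < m" "j \<le> n" for i j
  proof -
    have s1: "{e \<in> snd Gr. (i,j) \<in> e} = phi m ` {d \<in> Dm m n. (i,j) \<in> phi m d}" unfolding EE by auto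
    have i1: "inj_on (phi m) {d \<in> Dm m n. (i,j) \<in> phi m d}" using pinj by (rule inj_on_subset) auto
    have "vertex_sum (snd Gr) f (i,j) = (\<Sum>d\<in>{d \<in> Dm m n. (i,j) \<in> phi m d}. f (phi m d))"
      unfolding vertex_sum_def s1 by (simp add: sum.reindex[OF i1])
    also have "\<dots> = (\<Sum>d\<in>{d \<in> Dm m n. (i,j) \<in> phi m d}. hh m n d)"
      by (rule sum.cong) (auto simp: f_def inv_into_f_f[OF pinj])
    also have "\<dots> = Sv m n i j" using nbr[OF assms ij] sum_nbr[OF assms ij] by simp
    finally show ?thesis .
  qed
  have "inj_on (vertex_sum (snd Gr) f) (fst Gr)"
  proof
    fix x y assume x: "x \<in> fst Gr" and y: "y \<in> fst Gr" and eq: "vertex_sum (snd Gr) f x = vertex_sum (snd Gr) f y"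
    obtain i j where xd: "x = (i,j)" "i < m" "j \<le> n" using x VV by auto
    obtain i' j' where yd: "y = (i',j')" "i' < m" "j' \<le> n" using y VV by auto
    have "Sv m n i j = Sv m n i' j'" using eq vs xd yd by simp
    then show "x = y" using Sv_inj[OF assms xd(2) yd(2) xd(3) yd(3)] xd yd by simp
  qed
  then have "antimagic_labeling Gr f" using fb unfolding antimagic_labeling_def by simp
  then show ?thesis unfolding antimagic_def Gr_def by blast
qed

end
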